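(* Let $\kappa$ be a regular uncountable cardinal and $I$ an ideal on $\kappa$. If $I$ is quasinormal and prepleasant, then $I$ is pleasant, and therefore normal.
   Context: An ideal on $\kappa$ is a family of subsets of $\kappa$ closed under subsets and finite unions, which is $<\kappa$-complete and contains all singletons. $I^*=\{\kappa\setminus X: X\in I\}$. For $A\subseteq\kappa$ and $X_\alpha\subseteq\kappa$, $\bigtriangledown_{\alpha\in A}X_\alpha=\{\xi<\kappa:\exists\alpha<\xi\,(\alpha\in A\wedge \xi\in X_\alpha)\}$. $I$ is normal if $X_\alpha\in I$ for all $\alpha<\kappa$ implies $\bigtriangledown_{\alpha<\kappa}X_\alpha\in I$. $I$ is pleasant if whenever $A\in I$ and $X_\alpha\in I$ for all $\alpha$, then $\bigtriangledown_{\alpha\in A}X_\alpha\in I$. $I$ is prepleasant if for every $Q\in I$ and every sequence $\langle B_\alpha\rangle_{\alpha<\kappa}$ of bounded subsets of $\kappa$, $\bigtriangledown_{\alpha\in Q}B_\alpha\in I$. $I$ is quasinormal if for every sequence $\langle X_\alpha\rangle_{\alpha<\kappa}$ of members of $I$ there is $Q\in I^*$ with $\bigtriangledown_{\alpha\in Q}X_\alpha\in I$. *)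

theory Defs
  imports Main "HOL-Library.Equipollence"
begin

text \<open>The cardinal kappa is represented by a well-ordered type 'k whose order type is kappa:
  every proper initial segment has strictly smaller cardinality than the whole type.\<close>

definition is_cardinal_type :: "'k::wellorder itself \<Rightarrow> bool" where
  "is_cardinal_type _ \<longleftrightarrow> (\<forall>a::'k. {..<a} \<prec> (UNIV::'k set))"

definition bounded_in :: "'k::wellorder set \<Rightarrow> bool" where
  "bounded_in X \<longleftrightarrow> (\<exists>b. \<forall>x\<in>X. x < b)"

definition regular_uncountable_cardinal :: "'k::wellorder itself \<Rightarrow> bool" where
  "regular_uncountable_cardinal T \<longleftrightarrow> is_cardinal_type T \<and> uncountable (UNIV::'k set)
     \<and> (\<forall>X::'k set. X \<prec> (UNIV::'k set) \<longrightarrow> bounded_in X)"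

definition ideal_on :: "'k set set \<Rightarrow> bool" where
  "ideal_on I \<longleftrightarrow>
     (\<forall>X Y. X \<in> I \<longrightarrow> Y \<subseteq> X \<longrightarrow> Y \<in> I)
   \<and> (\<forall>X Y. X \<in> I \<longrightarrow> Y \<in> I \<longrightarrow> X \<union> Y \<in> I)
   \<and> (\<forall>F. F \<subseteq> I \<longrightarrow> F \<prec> (UNIV::'k set) \<longrightarrow> \<Union>F \<in> I)
   \<and> (\<forall>x. {x} \<in> I)"

definition dual_filter :: "'k set set \<Rightarrow> 'k set set" where
  "dual_filter I = {UNIV - X | X. X \<in> I}"

definition diag_union :: "'k::wellorder set \<Rightarrow> ('k \<Rightarrow> 'k set) \<Rightarrow> 'k set" where
  "diag_union A X = {\<xi>. \<exists>\<alpha><\<xi>. \<alpha> \<in> A \<and> \<xi> \<in> X \<alpha>}"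

definition normal_ideal :: "'k::wellorder set set \<Rightarrow> bool" where
  "normal_ideal I \<longleftrightarrow> (\<forall>X. (\<forall>\<alpha>. X \<alpha> \<in> I) \<longrightarrow> diag_union UNIV X \<in> I)"

definition pleasant :: "'k::wellorder set set \<Rightarrow> bool" where
  "pleasant I \<longleftrightarrow> (\<forall>A X. A \<in> I \<longrightarrow> (\<forall>\<alpha>. X \<alpha> \<in> I) \<longrightarrow> diag_union A X \<in> I)"

definition prepleasant :: "'k::wellorder set set \<Rightarrow> bool" where
  "prepleasant I \<longleftrightarrow> (\<forall>Q B. Q \<in> I \<longrightarrow> (\<forall>\<alpha>. bounded_in (B \<alpha>)) \<longrightarrow> diag_union Q B \<in> I)"

definition quasinormal :: "'k::wellorder set set \<Rightarrow> bool" where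
  "quasinormal I \<longleftrightarrow> (\<forall>X. (\<forall>\<alpha>. X \<alpha> \<in> I) \<longrightarrow> (\<exists>Q\<in>dual_filter I. diag_union Q X \<in> I))"

end

theory Submission
  imports Defs
begin

lemma ideal_sub: "ideal_on I \<Longrightarrow> X \<in> I \<Longrightarrow> Y \<subseteq> X \<Longrightarrow> Y \<in> I"
  unfolding ideal_on_def by blast
lemma ideal_un: "ideal_on I \<Longrightarrow> X \<in> I \<Longrightarrow> Y \<in> I \<Longrightarrow> X \<union> Y \<in> I"
  unfolding ideal_on_def by blast
lemma ideal_big: "ideal_on I \<Longrightarrow> F \<subseteq> I \<Longrightarrow> F \<prec> (UNIV::'k set) \<Longrightarrow> \<Union>F \<in> (I::'k set set)"
  unfolding ideal_on_def by blast
lemma ideal_single: "ideal_on I \<Longrightarrow> {x} \<in> I"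
  unfolding ideal_on_def by blast

lemma no_max:
  assumes "regular_uncountable_cardinal TYPE('k::wellorder)"
  shows "\<exists>s. (m::'k) < s"
proof (rule ccontr)
  assume "\<nexists>s. m < s"
  hence U: "UNIV = insert m {..<m}" by (auto simp: not_less intro: le_neq_trans)
  have seg: "{..<m} \<prec> (UNIV::'k set)"
    using assms unfolding regular_uncountable_cardinal_def is_cardinal_type_def by blast
  have "uncountable (UNIV::'k set)"
    using assms unfolding regular_uncountable_cardinal_def by blast
  hence "infinite {..<m}" using U by (metis countable_finite finite_insert)
  hence "insert m {..<m} \<approx> {..<m}" by (rule infinite_insert_eqpoll)
  hence "(UNIV::'k set) \<approx> {..<m}" using U by simp
  thus False using seg
    by (meson eq_lesspoll_trans lesspoll_not_refl eqpoll_sym lesspoll_eq_trans)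
qed

lemma small_in_I:
  assumes "ideal_on I" and "(S::'k set) \<prec> (UNIV::'k set)"
  shows "S \<in> I"
proof -
  have "(\<lambda>x. {x}) ` S \<lesssim> S" by (rule image_lepoll)
  hence "(\<lambda>x. {x}) ` S \<prec> (UNIV::'k set)" using assms(2) by (rule lesspoll_trans1)
  moreover have "(\<lambda>x. {x}) ` S \<subseteq> I" using ideal_single[OF assms(1)] by blast
  ultimately have "\<Union>((\<lambda>x. {x}) ` S) \<in> I" using ideal_big[OF assms(1)] by blast
  moreover have "\<Union>((\<lambda>x. {x}) ` S) = S" by blast
  ultimately show ?thesis by simp
qed

lemma atMost_small:
  assumes "regular_uncountable_cardinal TYPE('k::wellorder)"
  shows "{..(b::'k)} \<prec> (UNIV::'k set)"
proof -
  obtain s where s: "b < s" using no_max[OF assms] by blast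
  have "{..b} \<subseteq> {..<s}" using s by auto
  hence "{..b} \<lesssim> {..<s}" by (rule subset_imp_lepoll)
  moreover have "{..<s} \<prec> (UNIV::'k set)"
    using assms unfolding regular_uncountable_cardinal_def is_cardinal_type_def by blast
  ultimately show ?thesis by (rule lesspoll_trans1)
qed

lemma pleasant_main:
  fixes I :: "'k::wellorder set set"
  assumes R: "regular_uncountable_cardinal TYPE('k)"
    and Id: "ideal_on I"
    and qn: "quasinormal I"
    and pp: "prepleasant I"
    and nU: "UNIV \<notin> I"
  shows "pleasant I"
  unfolding pleasant_def
proof (intro allI impI)
  fix A :: "'k set" and X :: "'k \<Rightarrow> 'k set" assume A: "A \<in> I" and X: "\<forall>\<alpha>. X \<alpha> \<in> I"
  define Y where "Y = (\<lambda>\<beta>::'k. \<Union>(X ` {\<alpha>\<in>A. \<alpha> \<le> \<beta>}))"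
  have Y: "\<forall>\<beta>. Y \<beta> \<in> I"
  proof
    fix \<beta>
    have "X ` {\<alpha>\<in>A. \<alpha> \<le> \<beta>} \<lesssim> {\<alpha>\<in>A. \<alpha> \<le> \<beta>}" by (rule image_lepoll)
    moreover have "{\<alpha>\<in>A. \<alpha> \<le> \<beta>} \<lesssim> {..\<beta>}" by (rule subset_imp_lepoll) auto
    ultimately have "X ` {\<alpha>\<in>A. \<alpha> \<le> \<beta>} \<lesssim> {..\<beta>}" by (rule lepoll_trans)
    hence "X ` {\<alpha>\<in>A. \<alpha> \<le> \<beta>} \<prec> (UNIV::'k set)" using atMost_small[OF R] by (rule lesspoll_trans1)
    moreover have "X ` {\<alpha>\<in>A. \<alpha> \<le> \<beta>} \<subseteq> I" using X by blast
    ultimately show "Y \<beta> \<in> I" unfolding Y_def by (rule ideal_big[OF Id, rotated])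
  qed
  obtain Q where Q: "Q \<in> dual_filter I" and QY: "diag_union Q Y \<in> I"
    using qn Y unfolding quasinormal_def by blast
  obtain Z where Z: "Z \<in> I" "Q = UNIV - Z" using Q unfolding dual_filter_def by blast
  have unb: "\<exists>x\<in>Q. b \<le> x" for b
  proof (rule ccontr)
    assume "\<not> (\<exists>x\<in>Q. b \<le> x)"
    hence "Q \<subseteq> {..<b}" by (auto simp: not_le)
    moreover have "{..<b} \<in> I" using small_in_I[OF Id] R
      unfolding regular_uncountable_cardinal_def is_cardinal_type_def by blast
    ultimately have "Q \<in> I" using ideal_sub[OF Id] by blast
    hence "Z \<union> Q \<in> I" using Z(1) ideal_un[OF Id] by blast
    moreover have "Z \<union> Q = UNIV" using Z(2) by blast
    ultimately show False using nU by simp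
  qed
  define g where "g = (\<lambda>\<alpha>. LEAST \<beta>. \<beta> \<in> Q \<and> \<alpha> \<le> \<beta>)"
  have g: "g \<alpha> \<in> Q \<and> \<alpha> \<le> g \<alpha>" for \<alpha>
  proof -
    obtain x where "x \<in> Q \<and> \<alpha> \<le> x" using unb by blast
    thus ?thesis unfolding g_def by (rule LeastI)
  qed
  define B where "B = (\<lambda>\<alpha>. {..g \<alpha>})"
  have Bb: "\<forall>\<alpha>. bounded_in (B \<alpha>)"
  proof
    fix \<alpha>
    obtain s where "g \<alpha> < s" using no_max[OF R] by blast
    thus "bounded_in (B \<alpha>)" unfolding bounded_in_def B_def
      by (meson atMost_iff le_less_trans)
  qed
  have AB: "diag_union A B \<in> I" using pp A Bb unfolding prepleasant_def by blast
  have "diag_union A X \<subseteq> diag_union Q Y \<union> diag_union A B"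
  proof
    fix \<xi> assume "\<xi> \<in> diag_union A X"
    then obtain \<alpha> where a: "\<alpha> < \<xi>" "\<alpha> \<in> A" "\<xi> \<in> X \<alpha>" unfolding diag_union_def by blast
    show "\<xi> \<in> diag_union Q Y \<union> diag_union A B"
    proof (cases "g \<alpha> < \<xi>")
      case True
      have "\<xi> \<in> Y (g \<alpha>)" using a g[of \<alpha>] unfolding Y_def by blast
      thus ?thesis using True g[of \<alpha>] unfolding diag_union_def by blast
    next
      case False
      hence "\<xi> \<in> B \<alpha>" unfolding B_def by (simp add: not_less)
      thus ?thesis using a unfolding diag_union_def by blast
    qed
  qed
  moreover have "diag_union Q Y \<union> diag_union A B \<in> I" using QY AB ideal_un[OF Id] by blast
  ultimately show "diag_union A X \<in> I" using ideal_sub[OF Id] by blast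
qed

theorem corollary3p3:
  fixes I :: "'k::wellorder set set"
  assumes "regular_uncountable_cardinal TYPE('k)"
    and "ideal_on I"
    and "quasinormal I"
    and "prepleasant I"
  shows "pleasant I \<and> normal_ideal I"
proof (cases "UNIV \<in> I")
  case True
  hence all: "S \<in> I" for S using ideal_sub[OF assms(2)] by blast
  show ?thesis unfolding pleasant_def normal_ideal_def using all by blast
next
  case False
  have pl: "pleasant I" using pleasant_main[OF assms False] .
  have "normal_ideal I" unfolding normal_ideal_def
  proof (intro allI impI)
    fix X assume X: "\<forall>\<alpha>::'k. X \<alpha> \<in> I"
    obtain Q where Q: "Q \<in> dual_filter I" and QX: "diag_union Q X \<in> I"
      using assms(3) X unfolding quasinormal_def by blast
    obtain Z where Z: "Z \<in> I" "Q = UNIV - Z" using Q unfolding dual_filter_def by blast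
    have "diag_union Z X \<in> I" using pl Z(1) X unfolding pleasant_def by blast
    moreover have "diag_union UNIV X = diag_union Q X \<union> diag_union Z X"
      using Z(2) unfolding diag_union_def by blast
    ultimately show "diag_union UNIV X \<in> I" using QX ideal_un[OF assms(2)] by simp
  qed
  thus ?thesis using pl by blast
qed

end
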